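(* Let $p$ be a prime, let $n\geq p^2$ and let $D\subseteq\mathbb{F}_p^n$ be a set of size $|D|<\binom{n+p-2}{p-1}$. Then there exist disjoint sets $T_1,T_2\subseteq\mathbb{F}_p^n$ such that the $p$-dimensional rectangle $T_1\times T_2\times\cdots\times T_2$ contains at least $p^{2n+p-p^2}$ lines, but no lines with direction in $D$.
   Context: The line through $x\in\mathbb{F}_p^n$ in direction $d\in\mathbb{F}_p^n$ is the sequence $\ell_{x,d}=(x+\lambda d)_{\lambda\in\mathbb{F}_p}$ (lines are counted as pairs $(x,d)$). A rectangle $T_1\times\cdots\times T_p$ with $T_i\subseteq\mathbb{F}_p^n$ contains $\ell_{x,d}$ if $x+\lambda d\in T_{\lambda+1}$ for every $\lambda\in\{0,1,\dots,p-1\}$. *)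

theory Defs
  imports "HOL-Computational_Algebra.Primes"
begin

text \<open>F_p^n is modelled as functions nat => nat with coordinates in {0..<p}
  for indices i < n and 0 for indices i >= n.\<close>

definition vecs :: "nat \<Rightarrow> nat \<Rightarrow> (nat \<Rightarrow> nat) set" where
  "vecs p n = {x. \<forall>i. (i < n \<longrightarrow> x i < p) \<and> (n \<le> i \<longrightarrow> x i = 0)}"

definition line_pt :: "nat \<Rightarrow> (nat \<Rightarrow> nat) \<Rightarrow> (nat \<Rightarrow> nat) \<Rightarrow> nat \<Rightarrow> (nat \<Rightarrow> nat)" where
  "line_pt p x d l = (\<lambda>i. (x i + l * d i) mod p)"

text \<open>The rectangle T 1 x T 2 x ... x T p contains the line (x,d) iff
  x + l*d is in T (l+1) for every l in {0..p-1}.\<close>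
definition rect_contains :: "nat \<Rightarrow> (nat \<Rightarrow> (nat \<Rightarrow> nat) set) \<Rightarrow> (nat \<Rightarrow> nat) \<Rightarrow> (nat \<Rightarrow> nat) \<Rightarrow> bool" where
  "rect_contains p T x d = (\<forall>l<p. line_pt p x d l \<in> T (l + 1))"

definition num_lines :: "nat \<Rightarrow> nat \<Rightarrow> (nat \<Rightarrow> (nat \<Rightarrow> nat) set) \<Rightarrow> nat" where
  "num_lines p n T = card {(x, d). x \<in> vecs p n \<and> d \<in> vecs p n \<and> rect_contains p T x d}"

end

theory Submission
  imports Defs Complex_Main "HOL-Number_Theory.Number_Theory" "HOL-Computational_Algebra.Polynomial" "HOL-Library.Multiset"
begin

lemma primroot_ex:
  assumes "prime p" obtains a where "a < p" "ord p a = p - 1"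
proof -
  have "card {x\<in>{..<p}. ord p x = p - 1} = totient (p - 1)"
    using prime_card_primitive_roots(2)[OF prime_gt_1_nat[OF assms] assms] .
  moreover have "totient (p - 1) > 0" using prime_gt_1_nat[OF assms] by simp
  ultimately have "{x\<in>{..<p}. ord p x = p - 1} \<noteq> {}" by (metis card.empty less_irrefl)
  thus ?thesis using that by auto
qed

lemma powsum_zero_nat:
  assumes p: "prime p" and j: "j < p - 1"
  shows "(\<Sum>t<p. t ^ j) mod p = 0"
proof (cases "j = 0")
  case True thus ?thesis by simp
next
  case False
  obtain a where a: "a < p" "ord p a = p - 1" using primroot_ex[OF p] by blast
  have p1: "p > 1" using prime_gt_1_nat[OF p] .
  have nj: "\<not> [a ^ j = 1] (mod p)"
    using ord_works[of a p] a j False by auto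
  have "[a ^ (p-1) = 1] (mod p)" using ord_works[of a p] a by simp
  hence "a \<noteq> 0" using p1 by (cases "p - 1") (auto simp: cong_def, metis mult_zero_left mod_0 zero_neq_one nat.simps(3) One_nat_def neq0_conv)
  hence cop: "coprime a p" using a p
    by (metis coprime_commute le_less_trans nat_dvd_not_less neq0_conv not_le prime_imp_coprime)
  have inj: "inj_on (\<lambda>t. a * t mod p) {..<p}"
  proof (rule inj_onI)
    fix s t assume "s \<in> {..<p}" "t \<in> {..<p}" "a * s mod p = a * t mod p"
    hence "[a * s = a * t] (mod p)" by (simp add: cong_def)
    hence "[s = t] (mod p)" using cop by (metis cong_mult_lcancel_nat coprime_commute)
    thus "s = t" using \<open>s \<in> _\<close> \<open>t \<in> _\<close> by (simp add: cong_def)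
  qed
  have img: "(\<lambda>t. a * t mod p) ` {..<p} = {..<p}"
    by (rule endo_inj_surj) (use inj p1 in auto)
  have "(\<Sum>t<p. t ^ j) = (\<Sum>t<p. (a * t mod p) ^ j)"
    using sum.reindex[OF inj, of "\<lambda>t. t ^ j"] img by simp
  hence "[(\<Sum>t<p. t ^ j) = (\<Sum>t<p. (a * t) ^ j)] (mod p)"
    by (auto simp: cong_def intro!: cong_sum[unfolded cong_def] simp: power_mod)
  hence "[(\<Sum>t<p. t ^ j) * 1 = (\<Sum>t<p. t ^ j) * a ^ j] (mod p)"
    by (simp add: power_mult_distrib sum_distrib_left mult.commute)
  hence "\<not> coprime (\<Sum>t<p. t ^ j) p"
    using nj by (metis cong_mult_lcancel_nat cong_sym coprime_commute)
  hence "p dvd (\<Sum>t<p. t ^ j)" using p by (metis coprime_commute prime_imp_coprime)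
  thus ?thesis by simp
qed

inductive polyf :: "nat \<Rightarrow> ((nat \<Rightarrow> nat) \<Rightarrow> int) \<Rightarrow> bool" where
  pconst: "polyf k (\<lambda>_. c)"
| padd: "polyf k f \<Longrightarrow> polyf k g \<Longrightarrow> polyf k (\<lambda>x. f x + g x)"
| psmult: "polyf k f \<Longrightarrow> polyf k (\<lambda>x. c * f x)"
| pvar: "polyf k f \<Longrightarrow> polyf (Suc k) (\<lambda>x. int (x i) * f x)"

lemma polyf_mono1: "polyf k f \<Longrightarrow> polyf (Suc k) f"
  by (induction rule: polyf.induct) (auto intro: polyf.intros)

lemma polyf_mono: assumes "polyf k f" "k \<le> k'" shows "polyf k' f"
  using assms(2,1) by (induction k' rule: dec_induct) (auto intro: polyf_mono1)

lemma polyf_var: "polyf 1 (\<lambda>x. int (x i))"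
  using pvar[OF pconst[of 0 1], of i] by simp

lemma polyf_mult: "polyf a f \<Longrightarrow> polyf b g \<Longrightarrow> polyf (a + b) (\<lambda>x. f x * g x)"
proof (induction rule: polyf.induct)
  case (pconst k c)
  then show ?case using polyf_mono[OF psmult[OF pconst(1), of c]] by simp
next
  case (padd k f h)
  then show ?case using polyf.padd[OF padd.IH] by (simp add: algebra_simps)
next
  case (psmult k f c)
  then show ?case using polyf.psmult[OF psmult.IH, of c] by (simp add: algebra_simps)
next
  case (pvar k f i)
  then show ?case using polyf.pvar[OF pvar.IH, of i] by (simp add: algebra_simps)
qed

lemma polyf_diff: "polyf k f \<Longrightarrow> polyf k g \<Longrightarrow> polyf k (\<lambda>x. f x - g x)"
  using padd[OF _ psmult[of k g "-1"], of f] by simp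

lemma polyf_sum: "finite I \<Longrightarrow> (\<And>i. i \<in> I \<Longrightarrow> polyf k (f i)) \<Longrightarrow> polyf k (\<lambda>x. \<Sum>i\<in>I. f i x)"
  by (induction I rule: finite_induct) (auto intro: polyf.intros)

lemma polyf_prod: "finite I \<Longrightarrow> (\<And>i. i \<in> I \<Longrightarrow> polyf (k i) (f i)) \<Longrightarrow>
   polyf (\<Sum>i\<in>I. k i) (\<lambda>x. \<Prod>i\<in>I. f i x)"
proof (induction I rule: finite_induct)
  case empty
  then show ?case using pconst[of 0 1] by simp
next
  case (insert a I)
  then show ?case using polyf_mult[of "k a" "f a" "\<Sum>i\<in>I. k i"] by simp
qed

lemma polyf_pow: "polyf k f \<Longrightarrow> polyf (m * k) (\<lambda>x. f x ^ m)"
proof (induction m)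
  case 0
  then show ?case using pconst[of 0 1] by simp
next
  case (Suc m)
  then show ?case using polyf_mult[OF Suc(2) Suc.IH[OF Suc(2)]] by (simp add: add.commute)
qed

lemma polyf_subst: "polyf k f \<Longrightarrow> (\<And>i. polyf 1 (\<lambda>u. int (\<sigma> u i))) \<Longrightarrow> polyf k (\<lambda>u. f (\<sigma> u))"
proof (induction rule: polyf.induct)
  case (pvar k f i)
  then show ?case using polyf_mult[OF pvar(3)[of i] pvar.IH] by simp
qed (auto intro: polyf.intros)

lemma polyf_upd: "polyf k f \<Longrightarrow> polyf k (\<lambda>x. f (x(j := b)))"
proof (rule polyf_subst)
  fix i show "polyf 1 (\<lambda>u. int ((u(j := b)) i))"
    using polyf_var[of i] by (cases "i = j") (auto intro: pconst)
qed

lemma polyf_0_const: "polyf k f \<Longrightarrow> k = 0 \<Longrightarrow> \<exists>c. \<forall>x. f x = c"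
  by (induction rule: polyf.induct) auto

lemma polyf_cong:
  "polyf k f \<Longrightarrow> (\<And>i. x i mod p = y i mod p) \<Longrightarrow> f x mod int p = f y mod int p"
proof (induction rule: polyf.induct)
  case (padd k f g)
  then show ?case by (metis mod_add_cong)
next
  case (psmult k f c)
  then show ?case by (metis mod_mult_cong)
next
  case (pvar k f i)
  have "int (x i) mod int p = int (y i) mod int p" using pvar(3)[of i] by (metis of_nat_mod)
  then show ?case using pvar by (metis mod_mult_cong)
qed auto

lemma polyf_div:
  "polyf n f \<Longrightarrow> n = Suc k \<Longrightarrow> \<exists>q. polyf k q \<and> (\<forall>x. f x = (int (x j) - int b) * q x + f (x(j := b)))"
proof (induction arbitrary: k rule: polyf.induct)
  case (pconst k c)
  then show ?case by (auto intro: polyf.pconst)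
next
  case (padd n f g)
  then obtain q1 q2 where "polyf k q1" "\<forall>x. f x = (int (x j) - int b) * q1 x + f (x(j := b))"
    "polyf k q2" "\<forall>x. g x = (int (x j) - int b) * q2 x + g (x(j := b))" by blast
  moreover have "\<forall>x. f x + g x = (int (x j) - int b) * (q1 x + q2 x) + (f (x(j := b)) + g (x(j := b)))"
  proof
    fix x
    have "f x = (int (x j) - int b) * q1 x + f (x(j := b))" "g x = (int (x j) - int b) * q2 x + g (x(j := b))"
      using calculation by blast+
    thus "f x + g x = (int (x j) - int b) * (q1 x + q2 x) + (f (x(j := b)) + g (x(j := b)))"
      unfolding distrib_left by linarith
  qed
  moreover have "polyf k (\<lambda>x. q1 x + q2 x)" using calculation by (blast intro: polyf.padd)
  ultimately show ?case by blast
next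
  case (psmult n f c)
  then obtain q1 where "polyf k q1" "\<forall>x. f x = (int (x j) - int b) * q1 x + f (x(j := b))" by blast
  moreover have "\<forall>x. c * f x = (int (x j) - int b) * (c * q1 x) + c * f (x(j := b))"
  proof
    fix x
    have "f x = (int (x j) - int b) * q1 x + f (x(j := b))" using calculation by blast
    hence "c * f x = c * ((int (x j) - int b) * q1 x + f (x(j := b)))" by simp
    thus "c * f x = (int (x j) - int b) * (c * q1 x) + c * f (x(j := b))"
      by (simp only: distrib_left mult.left_commute)
  qed
  moreover have "polyf k (\<lambda>x. c * q1 x)" using calculation by (blast intro: polyf.psmult)
  ultimately show ?case by blast
next
  case (pvar n f i)
  hence nk: "n = k" by simp
  show ?case
  proof (cases n)
    case 0
    then obtain c where c: "\<forall>x. f x = c" using polyf_0_const[OF pvar(1)] by blast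
    show ?thesis
    proof (cases "i = j")
      case True
      then show ?thesis using c 0 nk
        by (intro exI[of _ "\<lambda>x. c"]) (auto intro: polyf.pconst simp: algebra_simps)
    next
      case False
      then show ?thesis using c 0 nk
        by (intro exI[of _ "\<lambda>x. 0"]) (auto intro: polyf.pconst simp: algebra_simps)
    qed
  next
    case (Suc n')
    then obtain q where q: "polyf n' q" "\<forall>x. f x = (int (x j) - int b) * q x + f (x(j := b))"
      using pvar.IH by blast
    show ?thesis
    proof (cases "i = j")
      case True
      have "polyf k (\<lambda>x. int (x i) * q x + f (x(j := b)))"
        using polyf.padd[OF polyf.pvar[OF q(1), of i], of "\<lambda>x. f (x(j := b))"] polyf_upd[OF pvar(1)] Suc nk by simp
      moreover have "\<forall>x. int (x i) * f x = (int (x j) - int b) * (int (x i) * q x + f (x(j := b)))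
          + int ((x(j := b)) i) * f (x(j := b))"
      proof
        fix x
        have h: "f x = (int (x j) - int b) * q x + f (x(j := b))" using q(2) by blast
        show "int (x i) * f x = (int (x j) - int b) * (int (x i) * q x + f (x(j := b)))
          + int ((x(j := b)) i) * f (x(j := b))"
          unfolding h using True by (simp add: algebra_simps)
      qed
      ultimately show ?thesis by blast
    next
      case False
      have "polyf k (\<lambda>x. int (x i) * q x)"
        using polyf.pvar[OF q(1), of i] Suc nk by simp
      moreover have "\<forall>x. int (x i) * f x = (int (x j) - int b) * (int (x i) * q x)
          + int ((x(j := b)) i) * f (x(j := b))"
      proof
        fix x
        have h: "f x = (int (x j) - int b) * q x + f (x(j := b))" using q(2) by blast
        show "int (x i) * f x = (int (x j) - int b) * (int (x i) * q x)
          + int ((x(j := b)) i) * f (x(j := b))"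
          unfolding h using False by (simp add: algebra_simps)
      qed
      ultimately show ?thesis by blast
    qed
  qed
qed

lemma polyf_line:
  "polyf k f \<Longrightarrow> \<exists>P. \<forall>x d. degree (P x d) \<le> k \<and> (\<forall>l. f (\<lambda>i. x i + l * d i) = poly (P x d) (int l))
       \<and> (\<forall>y. coeff (P x d) k = coeff (P y d) k)"
proof (induction rule: polyf.induct)
  case (pconst k c)
  show ?case by (rule exI[of _ "\<lambda>x d. [:c:]"]) auto
next
  case (padd k f g)
  then obtain P1 P2 where
    P1: "\<forall>x d. degree (P1 x d) \<le> k \<and> (\<forall>l. f (\<lambda>i. x i + l * d i) = poly (P1 x d) (int l))
       \<and> (\<forall>y. coeff (P1 x d) k = coeff (P1 y d) k)" and
    P2: "\<forall>x d. degree (P2 x d) \<le> k \<and> (\<forall>l. g (\<lambda>i. x i + l * d i) = poly (P2 x d) (int l))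
       \<and> (\<forall>y. coeff (P2 x d) k = coeff (P2 y d) k)" by blast
  show ?case
  proof (rule exI[of _ "\<lambda>x d. P1 x d + P2 x d"], intro allI conjI)
    fix x d
    show "degree (P1 x d + P2 x d) \<le> k" using P1 P2 by (blast intro: degree_add_le)
  next
    fix x d l
    have "f (\<lambda>i. x i + l * d i) = poly (P1 x d) (int l)" "g (\<lambda>i. x i + l * d i) = poly (P2 x d) (int l)"
      using P1 P2 by blast+
    thus "f (\<lambda>i. x i + l * d i) + g (\<lambda>i. x i + l * d i) = poly (P1 x d + P2 x d) (int l)" by simp
  next
    fix x d y
    have "poly.coeff (P1 x d) k = poly.coeff (P1 y d) k" "poly.coeff (P2 x d) k = poly.coeff (P2 y d) k"
      using P1 P2 by blast+
    thus "poly.coeff (P1 x d + P2 x d) k = poly.coeff (P1 y d + P2 y d) k" by simp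
  qed
next
  case (psmult k f c)
  then obtain P1 where
    P1: "\<forall>x d. degree (P1 x d) \<le> k \<and> (\<forall>l. f (\<lambda>i. x i + l * d i) = poly (P1 x d) (int l))
       \<and> (\<forall>y. coeff (P1 x d) k = coeff (P1 y d) k)" by blast
  show ?case
    by (rule exI[of _ "\<lambda>x d. smult c (P1 x d)"]) (use P1 in \<open>auto\<close>)
next
  case (pvar k f i)
  then obtain P1 where
    P1: "\<forall>x d. degree (P1 x d) \<le> k \<and> (\<forall>l. f (\<lambda>i. x i + l * d i) = poly (P1 x d) (int l))
       \<and> (\<forall>y. coeff (P1 x d) k = coeff (P1 y d) k)" by blast
  have deg: "degree ([:int (x i), int (d i):] * P1 x d) \<le> Suc k" for x d
  proof -
    have "degree ([:int (x i), int (d i):] * P1 x d) \<le> degree [:int (x i), int (d i):] + degree (P1 x d)"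
      by (rule degree_mult_le)
    also have "\<dots> \<le> 1 + k" using P1 by (intro add_mono) auto
    finally show ?thesis by simp
  qed
  have cf: "coeff ([:int (x i), int (d i):] * P1 x d) (Suc k) = int (d i) * coeff (P1 x d) k" for x d
  proof -
    have "coeff (P1 x d) (Suc k) = 0" using P1 by (intro coeff_eq_0) (meson le_imp_less_Suc)
    thus ?thesis by (simp add: mult_pCons_left)
  qed
  show ?case
  proof (rule exI[of _ "\<lambda>x d. [:int (x i), int (d i):] * P1 x d"], intro allI conjI)
    fix x d
    show "degree ([:int (x i), int (d i):] * P1 x d) \<le> Suc k" by (rule deg)
  next
    fix x d l
    show "int ((x i + l * d i)) * f (\<lambda>i. x i + l * d i) = poly ([:int (x i), int (d i):] * P1 x d) (int l)"
    proof -
      have h: "f (\<lambda>i. x i + l * d i) = poly (P1 x d) (int l)" using P1 by blast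
      show ?thesis unfolding h by (simp add: algebra_simps)
    qed
  next
    fix x d y
    show "poly.coeff ([:int (x i), int (d i):] * P1 x d) (Suc k) = poly.coeff ([:int (y i), int (d i):] * P1 y d) (Suc k)"
    proof -
      have "poly.coeff (P1 x d) k = poly.coeff (P1 y d) k" using P1 by blast
      thus ?thesis unfolding cf by simp
    qed
  qed
qed

lemma poly_sum_le: fixes Q :: "int poly" shows "degree Q \<le> n \<Longrightarrow> poly Q a = (\<Sum>j\<le>n. poly.coeff Q j * a ^ j)"
proof -
  assume "degree Q \<le> n"
  have "poly Q a = (\<Sum>j\<le>degree Q. poly.coeff Q j * a ^ j)" by (rule poly_altdef)
  also have "\<dots> = (\<Sum>j\<le>n. poly.coeff Q j * a ^ j)"
    using \<open>degree Q \<le> n\<close> by (intro sum.mono_neutral_left) (auto simp: coeff_eq_0)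
  finally show ?thesis .
qed

lemma powsum_zero_int:
  assumes "prime p" "j < p - 1"
  shows "int p dvd (\<Sum>t<p. int t ^ j)"
proof -
  have "p dvd (\<Sum>t<p. t ^ j)" using powsum_zero_nat[OF assms] by auto
  hence "int p dvd int (\<Sum>t<p. t ^ j)" by (simp only: int_dvd_int_iff)
  moreover have "int (\<Sum>t<p. t ^ j) = (\<Sum>t<p. int t ^ j)" by simp
  ultimately show ?thesis by simp
qed

lemma sum_line_top:
  assumes p: "prime p" and f: "polyf (p - 1) f"
    and P: "\<forall>x d. degree (P x d) \<le> p - 1 \<and> (\<forall>l. f (\<lambda>i. x i + l * d i) = poly (P x d) (int l))"
  shows "(\<Sum>l<p. f (\<lambda>i. x i + l * d i)) mod int p
     = (poly.coeff (P x d) (p - 1) * (\<Sum>l<p. int l ^ (p - 1))) mod int p"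
proof -
  obtain m where m: "p - 1 = Suc m" using prime_gt_1_nat[OF p] by (metis Suc_diff_Suc diff_zero)
  have "(\<Sum>l<p. f (\<lambda>i. x i + l * d i)) = (\<Sum>l<p. \<Sum>j\<le>p-1. poly.coeff (P x d) j * int l ^ j)"
    using P poly_sum_le by (intro sum.cong) auto
  also have "\<dots> = (\<Sum>j\<le>p-1. poly.coeff (P x d) j * (\<Sum>l<p. int l ^ j))"
    by (subst sum.swap) (simp add: sum_distrib_left)
  also have "\<dots> = (\<Sum>j<p-1. poly.coeff (P x d) j * (\<Sum>l<p. int l ^ j))
      + poly.coeff (P x d) (p - 1) * (\<Sum>l<p. int l ^ (p - 1))"
    unfolding m by (simp add: lessThan_Suc_atMost[symmetric])
  finally have eq: "(\<Sum>l<p. f (\<lambda>i. x i + l * d i)) = \<dots>" .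
  have "int p dvd (\<Sum>j<p-1. poly.coeff (P x d) j * (\<Sum>l<p. int l ^ j))"
    using powsum_zero_int[OF p] by (intro dvd_sum) auto
  hence "(\<Sum>j<p-1. poly.coeff (P x d) j * (\<Sum>l<p. int l ^ j)) mod int p = 0" by simp
  thus ?thesis unfolding eq by (simp add: mod_add_left_eq[symmetric])
qed

lemma sum_line:
  assumes p: "prime p" and f: "polyf (p - 1) f"
  shows "(\<Sum>l<p. f (\<lambda>i. x i + l * d i)) mod int p = (\<Sum>l<p. f (\<lambda>i. l * d i)) mod int p"
proof -
  obtain P where P: "\<forall>x d. degree (P x d) \<le> p - 1 \<and> (\<forall>l. f (\<lambda>i. x i + l * d i) = poly (P x d) (int l))
       \<and> (\<forall>y. poly.coeff (P x d) (p - 1) = poly.coeff (P y d) (p - 1))"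
    using polyf_line[OF f] by blast
  have P': "\<forall>x d. degree (P x d) \<le> p - 1 \<and> (\<forall>l. f (\<lambda>i. x i + l * d i) = poly (P x d) (int l))"
    using P by blast
  have "(\<Sum>l<p. f (\<lambda>i. l * d i)) = (\<Sum>l<p. f (\<lambda>i. (\<lambda>_. 0) i + l * d i))" by simp
  hence "(\<Sum>l<p. f (\<lambda>i. l * d i)) mod int p
     = (poly.coeff (P (\<lambda>_. 0) d) (p - 1) * (\<Sum>l<p. int l ^ (p - 1))) mod int p"
    using sum_line_top[OF p f P', of "\<lambda>_. 0" d] by simp
  moreover have "poly.coeff (P (\<lambda>_. 0) d) (p - 1) = poly.coeff (P x d) (p - 1)" using P by blast
  ultimately show ?thesis using sum_line_top[OF p f P', of x d] by simp
qed


lemma key_step: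
  assumes "1 \<le> y" "y \<le> q"
  shows "(q + 1) ^ (y - 1) \<le> y * q ^ (y - 1)"
proof (cases "y \<le> 2")
  case True
  then consider "y = 1" | "y = 2" using assms by linarith
  thus ?thesis using assms by cases auto
next
  case False
  have q0: "real q > 0" using assms by simp
  have "real (q + 1) ^ (y - 1) = real q ^ (y - 1) * (1 + 1 / real q) ^ (y - 1)"
    using q0 by (simp add: power_mult_distrib[symmetric] field_simps)
  also have "(1 + 1 / real q) ^ (y - 1) \<le> exp (1 / real q) ^ (y - 1)"
    by (intro power_mono) (use q0 exp_ge_add_one_self[of "1 / real q"] in auto)
  also have "exp (1 / real q) ^ (y - 1) = exp (real (y - 1) / real q)"
    by (simp add: exp_of_nat_mult[symmetric])
  also have "\<dots> \<le> exp 1" using assms q0 by (simp add: field_simps)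
  also have "\<dots> \<le> real y" using exp_le False by linarith
  finally have "real (q + 1) ^ (y - 1) \<le> real q ^ (y - 1) * real y"
    by (simp add: mult_left_mono q0)
  hence "real ((q + 1) ^ (y - 1)) \<le> real (y * q ^ (y - 1))" by (simp add: mult.commute)
  thus ?thesis by (simp only: of_nat_le_iff)
qed

lemma key_ineq:
  assumes "1 \<le> y" "y \<le> p"
  shows "p ^ (y - 1) \<le> y ^ (p - 1)"
  using assms(2)
proof (induction p rule: dec_induct)
  case base thus ?case by simp
next
  case (step q)
  have "Suc q ^ (y - 1) \<le> y * q ^ (y - 1)" using key_step[OF assms(1) step(1)] by simp
  also have "\<dots> \<le> y * y ^ (q - 1)" using step.IH by simp
  also have "\<dots> = y ^ (Suc q - 1)" using step(1) assms(1)
    by (cases q) (auto)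
  finally show ?case .
qed


lemma vecs_finite: "finite (vecs p m)"
proof -
  have "vecs p m = {f. \<forall>x. (x \<in> {..<m} \<longrightarrow> f x \<in> {..<p}) \<and> (x \<notin> {..<m} \<longrightarrow> f x = 0)}"
    unfolding vecs_def by auto
  thus ?thesis using finite_set_of_finite_funs[of "{..<m}" "{..<p}" 0] by simp
qed

lemma vecs_upd: "x \<in> vecs p (Suc m) \<Longrightarrow> t < p \<Longrightarrow> x(m := t) \<in> vecs p (Suc m)"
  unfolding vecs_def by auto

lemma vecs_Suc: "vecs p (Suc m) = (\<lambda>(x, t). x(m := t)) ` (vecs p m \<times> {..<p})"
proof (intro equalityI subsetI)
  fix y assume y: "y \<in> vecs p (Suc m)"
  have "y = (y(m := 0))(m := y m)" by simp
  moreover have "y(m := 0) \<in> vecs p m" "y m < p" using y unfolding vecs_def by auto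
  ultimately show "y \<in> (\<lambda>(x, t). x(m := t)) ` (vecs p m \<times> {..<p})"
    by (intro rev_image_eqI[of "(y(m := 0), y m)"]) auto
next
  fix y assume "y \<in> (\<lambda>(x, t). x(m := t)) ` (vecs p m \<times> {..<p})"
  thus "y \<in> vecs p (Suc m)" unfolding vecs_def by (auto simp: less_Suc_eq)
qed

lemma vecs_Suc_inj: "inj_on (\<lambda>(x, t). x(m := t)) (vecs p m \<times> {..<p})"
proof (rule inj_onI, clarsimp)
  fix x t y s assume xy: "x \<in> vecs p m" "y \<in> vecs p m" and e: "x(m := t) = y(m := s)"
  have xm: "x m = 0" "y m = 0" using xy unfolding vecs_def by auto
  have "t = s" using fun_cong[OF e, of m] by simp
  moreover have "x = y"
  proof
    fix i show "x i = y i" using fun_cong[OF e, of i] xm by (cases "i = m") auto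
  qed
  ultimately show "x = y \<and> t = s" by simp
qed

lemma not_dvd_diff:
  assumes "b < p" "t < p" "b \<noteq> t"
  shows "\<not> int p dvd (int b - int t)"
proof
  assume "int p dvd (int b - int t)"
  hence "[int b = int t] (mod int p)" by (simp add: cong_iff_dvd_diff)
  hence "[b = t] (mod p)" by (simp add: cong_int_iff)
  thus False using assms by (simp add: cong_def)
qed

lemma not_dvd_prod:
  assumes "prime p" "finite B" "B \<subseteq> {..<p}" "b < p" "b \<notin> B"
  shows "\<not> int p dvd (\<Prod>t\<in>B. int b - int t)"
proof
  assume "int p dvd (\<Prod>t\<in>B. int b - int t)"
  moreover have "prime (int p)" using assms(1) by simp
  ultimately have "\<exists>t\<in>B. int p dvd (int b - int t)"
    using prime_dvd_prod_iff[OF assms(2) \<open>prime (int p)\<close>] by simp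
  then obtain t where "t \<in> B" "int p dvd (int b - int t)" by blast
  thus False using not_dvd_diff[of b p t] assms by auto
qed

lemma iter_div:
  assumes p: "prime p" and f: "polyf k f" and B: "finite B" "B \<subseteq> {..<p}"
    and van: "\<forall>t\<in>B. \<forall>x\<in>vecs p (Suc m). x m = t \<longrightarrow> f x mod int p = 0"
  shows "(\<forall>x\<in>vecs p (Suc m). f x mod int p = 0) \<or>
    (card B \<le> k \<and> (\<exists>q. polyf (k - card B) q \<and>
       (\<forall>x\<in>vecs p (Suc m). f x mod int p = ((\<Prod>t\<in>B. int (x m) - int t) * q x) mod int p)))"
  using B van
proof (induction B rule: finite_induct)
  case empty
  then show ?case using f by auto
next
  case (insert b B)
  have bp: "b < p" and Bp: "B \<subseteq> {..<p}" using insert.prems by auto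
  from insert.IH[OF Bp] insert.prems(2)
  consider "\<forall>x\<in>vecs p (Suc m). f x mod int p = 0"
    | "card B \<le> k" "\<exists>q. polyf (k - card B) q \<and>
       (\<forall>x\<in>vecs p (Suc m). f x mod int p = ((\<Prod>t\<in>B. int (x m) - int t) * q x) mod int p)"
    by auto
  then show ?case
  proof cases
    case 1 then show ?thesis by blast
  next
    case 2
    then obtain q where q: "polyf (k - card B) q"
      "\<forall>x\<in>vecs p (Suc m). f x mod int p = ((\<Prod>t\<in>B. int (x m) - int t) * q x) mod int p" by blast
    have pr: "prime (int p)" using p by simp
    have qb: "q x mod int p = 0" if x: "x \<in> vecs p (Suc m)" "x m = b" for x
    proof -
      have "f x mod int p = 0" using insert.prems(2) x by auto
      moreover have "f x mod int p = ((\<Prod>t\<in>B. int b - int t) * q x) mod int p" using q(2) x by simp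
      ultimately have "int p dvd ((\<Prod>t\<in>B. int b - int t) * q x)" by (simp add: dvd_eq_mod_eq_0)
      moreover have "\<not> int p dvd (\<Prod>t\<in>B. int b - int t)"
        using not_dvd_prod[OF p insert(1) Bp bp insert(2)] .
      ultimately show ?thesis using pr by (simp add: prime_dvd_mult_iff)
    qed
    show ?thesis
    proof (cases "k - card B")
      case 0
      then obtain c where c: "\<forall>x. q x = c" using polyf_0_const[OF q(1)] by blast
      have "(\<lambda>_. 0)(m := b) \<in> vecs p (Suc m)" using bp unfolding vecs_def by auto
      hence "q ((\<lambda>_. 0)(m := b)) mod int p = 0" using qb[of "(\<lambda>_. 0)(m := b)"] by simp
      hence c0: "c mod int p = 0" using c by simp
      have "\<forall>x\<in>vecs p (Suc m). f x mod int p = 0"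
      proof
        fix x assume x: "x \<in> vecs p (Suc m)"
        have "f x mod int p = ((\<Prod>t\<in>B. int (x m) - int t) * c) mod int p" using q(2) c x by simp
        also have "\<dots> = ((\<Prod>t\<in>B. int (x m) - int t) * (c mod int p)) mod int p"
          by (simp only: mod_mult_right_eq)
        also have "\<dots> = 0" unfolding c0 by simp
        finally show "f x mod int p = 0" .
      qed
      then show ?thesis by blast
    next
      case (Suc k')
      obtain q' where q': "polyf k' q'" "\<forall>x. q x = (int (x m) - int b) * q' x + q (x(m := b))"
        using polyf_div[OF q(1) Suc, of m b] by blast
      have "f x mod int p = ((\<Prod>t\<in>insert b B. int (x m) - int t) * q' x) mod int p"
        if x: "x \<in> vecs p (Suc m)" for x
      proof -
        have "q (x(m := b)) mod int p = 0" using qb[of "x(m := b)"] vecs_upd[OF x bp] by simp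
        note h0 = this
        have "q x mod int p = ((int (x m) - int b) * q' x + q (x(m := b))) mod int p"
          using q'(2) by metis
        also have "\<dots> = ((int (x m) - int b) * q' x + q (x(m := b)) mod int p) mod int p"
          by (simp only: mod_add_right_eq)
        also have "\<dots> = ((int (x m) - int b) * q' x) mod int p" unfolding h0 by simp
        finally have h1: "q x mod int p = ((int (x m) - int b) * q' x) mod int p" .
        have "((\<Prod>t\<in>B. int (x m) - int t) * q x) mod int p
             = ((\<Prod>t\<in>B. int (x m) - int t) * (q x mod int p)) mod int p"
          by (simp only: mod_mult_right_eq)
        also have "\<dots> = ((\<Prod>t\<in>B. int (x m) - int t) * ((int (x m) - int b) * q' x mod int p)) mod int p"
          unfolding h1 ..
        also have "\<dots> = ((\<Prod>t\<in>B. int (x m) - int t) * ((int (x m) - int b) * q' x)) mod int p"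
          by (simp only: mod_mult_right_eq)
        finally have "((\<Prod>t\<in>B. int (x m) - int t) * q x) mod int p
             = ((\<Prod>t\<in>B. int (x m) - int t) * ((int (x m) - int b) * q' x)) mod int p" .
        thus ?thesis using q(2) x insert(1,2) by (simp add: ac_simps)
      qed
      moreover have "card (insert b B) \<le> k" "k - card (insert b B) = k'"
        using Suc insert(1,2) by auto
      ultimately show ?thesis using q'(1) by auto
    qed
  qed
qed


lemma vecs_0: "vecs p 0 = {\<lambda>_. 0}"
  unfolding vecs_def by auto

theorem alon_furedi:
  assumes p: "prime p"
  shows "polyf k f \<Longrightarrow> (\<exists>x\<in>vecs p m. f x mod int p \<noteq> 0) \<Longrightarrow>
     p ^ (m * (p - 1)) \<le> card {x\<in>vecs p m. f x mod int p \<noteq> 0} ^ (p - 1) * p ^ k"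
proof (induction m arbitrary: k f)
  case 0
  hence "{x\<in>vecs p 0. f x mod int p \<noteq> 0} = {\<lambda>_. 0}" by (auto simp: vecs_0)
  moreover have "p > 0" using prime_gt_0_nat[OF p] .
  ultimately show ?case by simp
next
  case (Suc m)
  have p1: "p > 1" using prime_gt_1_nat[OF p] .
  define S where "S t = {x\<in>vecs p m. f (x(m := t)) mod int p \<noteq> 0}" for t
  define Sall where "Sall = {x\<in>vecs p (Suc m). f x mod int p \<noteq> 0}"
  have finS: "finite (S t)" for t unfolding S_def using vecs_finite[of p m] by simp
  have Sall_eq: "Sall = (\<lambda>(x, t). x(m := t)) ` (SIGMA x:vecs p m. {t\<in>{..<p}. f (x(m := t)) mod int p \<noteq> 0})"
    unfolding Sall_def vecs_Suc by auto
  have "card Sall = card (SIGMA x:vecs p m. {t\<in>{..<p}. f (x(m := t)) mod int p \<noteq> 0})"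
    unfolding Sall_eq by (rule card_image, rule inj_on_subset[OF vecs_Suc_inj]) auto
  also have "\<dots> = (\<Sum>x\<in>vecs p m. card {t\<in>{..<p}. f (x(m := t)) mod int p \<noteq> 0})"
    by (rule card_SigmaI) (auto simp: vecs_finite)
  also have "\<dots> = (\<Sum>x\<in>vecs p m. \<Sum>t<p. if f (x(m := t)) mod int p \<noteq> 0 then 1 else 0)"
    by (intro sum.cong refl) (simp add: sum.If_cases Int_def)
  also have "\<dots> = (\<Sum>t<p. \<Sum>x\<in>vecs p m. if f (x(m := t)) mod int p \<noteq> 0 then 1 else 0)"
    by (rule sum.swap)
  also have "\<dots> = (\<Sum>t<p. card (S t))"
    unfolding S_def by (intro sum.cong refl) (simp add: sum.If_cases vecs_finite Int_def)
  finally have card_all: "card Sall = (\<Sum>t<p. card (S t))" .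
  define B where "B = {t\<in>{..<p}. S t = {}}"
  define A where "A = {..<p} - B"
  have finB: "finite B" "B \<subseteq> {..<p}" unfolding B_def by auto
  have van: "\<forall>t\<in>B. \<forall>x\<in>vecs p (Suc m). x m = t \<longrightarrow> f x mod int p = 0"
  proof (intro ballI impI)
    fix t x assume t: "t \<in> B" and x: "x \<in> vecs p (Suc m)" "x m = t"
    have "x(m := 0) \<in> vecs p m" using x unfolding vecs_def by auto
    moreover have "(x(m := 0))(m := t) = x" using x by auto
    ultimately show "f x mod int p = 0" using t unfolding B_def S_def by force
  qed
  obtain x0 where x0: "x0 \<in> vecs p (Suc m)" "f x0 mod int p \<noteq> 0" using Suc.prems(2) by blast
  have x0m: "x0 m < p" using x0(1) unfolding vecs_def by auto
  have "x0(m := 0) \<in> S (x0 m)" using x0 unfolding S_def vecs_def by auto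
  hence t0A: "x0 m \<in> A" using x0m unfolding A_def B_def by auto
  from iter_div[OF p Suc.prems(1) finB van] x0
  obtain q where bk: "card B \<le> k" and q: "polyf (k - card B) q"
    "\<forall>x\<in>vecs p (Suc m). f x mod int p = ((\<Prod>s\<in>B. int (x m) - int s) * q x) mod int p"
    by blast
  have pr: "prime (int p)" using p by simp
  have SA: "S t = {x\<in>vecs p m. q (x(m := t)) mod int p \<noteq> 0}" if t: "t \<in> A" for t
  proof -
    have tp: "t < p" "t \<notin> B" using t unfolding A_def by auto
    have nd: "\<not> int p dvd (\<Prod>s\<in>B. int t - int s)" using not_dvd_prod[OF p finB tp] .
    have eqv: "f (x(m := t)) mod int p = 0 \<longleftrightarrow> q (x(m := t)) mod int p = 0" if x: "x \<in> vecs p m" for x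
    proof -
      have xv: "x(m := t) \<in> vecs p (Suc m)" using x tp unfolding vecs_def by auto
      have "f (x(m := t)) mod int p = ((\<Prod>s\<in>B. int t - int s) * q (x(m := t))) mod int p"
        using q(2) xv by simp
      hence "int p dvd f (x(m := t)) \<longleftrightarrow> int p dvd ((\<Prod>s\<in>B. int t - int s) * q (x(m := t)))"
        by (simp only: dvd_eq_mod_eq_0)
      also have "\<dots> \<longleftrightarrow> int p dvd q (x(m := t))" using nd prime_dvd_mult_iff[OF pr] by blast
      finally show ?thesis by (simp only: dvd_eq_mod_eq_0)
    qed
    show ?thesis unfolding S_def
    proof (rule Collect_cong)
      fix x show "(x \<in> vecs p m \<and> f (x(m := t)) mod int p \<noteq> 0) = (x \<in> vecs p m \<and> q (x(m := t)) mod int p \<noteq> 0)"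
        using eqv[of x] by auto
    qed
  qed
  have IH: "p ^ (m * (p - 1)) \<le> card (S t) ^ (p - 1) * p ^ (k - card B)" if t: "t \<in> A" for t
  proof -
    have "S t \<noteq> {}" using t unfolding A_def B_def by auto
    hence "\<exists>x\<in>vecs p m. q (x(m := t)) mod int p \<noteq> 0" using SA[OF t] by auto
    from Suc.IH[OF polyf_upd[OF q(1), of m t] this] show ?thesis using SA[OF t] by (simp add: fun_upd_def)
  qed
  have finA: "finite A" "A \<noteq> {}" using t0A unfolding A_def by auto
  define s where "s = Min ((\<lambda>t. card (S t)) ` A)"
  have "s \<in> (\<lambda>t. card (S t)) ` A" unfolding s_def using finA by (intro Min_in) auto
  then obtain t1 where t1: "t1 \<in> A" "s = card (S t1)" by blast
  have sle: "s \<le> card (S t)" if "t \<in> A" for t unfolding s_def using finA that by auto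
  have cardA: "card A = p - card B" unfolding A_def using finB by (simp add: card_Diff_subset)
  define y where "y = p - card B"
  have "card A > 0" using finA by (simp add: card_gt_0_iff)
  hence bp: "card B < p" using cardA by simp
  have "card A * s = (\<Sum>t\<in>A. s)" by simp
  also have "\<dots> \<le> (\<Sum>t\<in>A. card (S t))" using sle by (intro sum_mono) auto
  also have "\<dots> \<le> (\<Sum>t<p. card (S t))" unfolding A_def by (intro sum_mono2) auto
  finally have cs: "y * s \<le> card Sall" using card_all cardA y_def by simp
  have e1: "p ^ (Suc m * (p - 1)) \<le> p ^ (p - 1) * (s ^ (p - 1) * p ^ (k - card B))"
  proof -
    have "p ^ (Suc m * (p - 1)) = p ^ (p - 1) * p ^ (m * (p - 1))" by (simp add: power_add)
    also have "\<dots> \<le> p ^ (p - 1) * (s ^ (p - 1) * p ^ (k - card B))"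
      using IH[OF t1(1)] t1(2) by simp
    finally show ?thesis .
  qed
  have e2: "p ^ (p - 1) = p ^ (y - 1) * p ^ card B"
    using bp y_def by (simp add: power_add[symmetric])
  have e3: "p ^ (y - 1) \<le> y ^ (p - 1)" using key_ineq[of y p] bp y_def by simp
  have e4: "p ^ k = p ^ card B * p ^ (k - card B)" using bk by (simp add: power_add[symmetric])
  have "p ^ (Suc m * (p - 1)) \<le> (p ^ (y - 1) * p ^ card B) * (s ^ (p - 1) * p ^ (k - card B))"
    using e1 e2 by simp
  also have "\<dots> \<le> (y ^ (p - 1) * p ^ card B) * (s ^ (p - 1) * p ^ (k - card B))"
    using e3 by (intro mult_right_mono) auto
  also have "\<dots> = (y ^ (p - 1) * s ^ (p - 1)) * (p ^ card B * p ^ (k - card B))"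
    by (simp only: ac_simps)
  also have "\<dots> = (y * s) ^ (p - 1) * p ^ k"
    unfolding e4 power_mult_distrib ..
  also have "\<dots> \<le> card Sall ^ (p - 1) * p ^ k" using cs by (intro mult_right_mono power_mono) auto
  finally show ?case unfolding Sall_def .
qed


definition mono :: "nat \<Rightarrow> nat multiset \<Rightarrow> (nat \<Rightarrow> nat) \<Rightarrow> int" where
  "mono n e v = (\<Prod>i<n. int (v i) ^ count e i)"

definition gpol :: "nat \<Rightarrow> nat \<Rightarrow> (nat multiset \<Rightarrow> int) \<Rightarrow> (nat \<Rightarrow> nat) \<Rightarrow> int" where
  "gpol n p c v = (\<Sum>e\<in>multisets_of_size {..<n} (p - 1). c e * mono n e v)"

lemma sum_count_lt: fixes e :: "nat multiset" shows "set_mset e \<subseteq> {..<n} \<Longrightarrow> (\<Sum>i<n. count e i) = size e"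
proof -
  assume a: "set_mset e \<subseteq> {..<n}"
  have "size e = sum (count e) (set_mset e)" by (rule size_multiset_overloaded_eq)
  also have "\<dots> = (\<Sum>i<n. count e i)"
    using a by (intro sum.mono_neutral_left) (auto simp: count_eq_zero_iff)
  finally show ?thesis by simp
qed

lemma finite_M: "finite (multisets_of_size {..<(n::nat)} k)"
  by (rule finite_multisets_of_size) simp

lemma polyf_mono_e: "e \<in> multisets_of_size {..<n} k \<Longrightarrow> polyf k (mono n e)"
proof -
  assume e: "e \<in> multisets_of_size {..<n} k"
  have "polyf (\<Sum>i<n. count e i * 1) (\<lambda>v. \<Prod>i<n. int (v i) ^ count e i)"
    by (rule polyf_prod) (use polyf_pow[OF polyf_var] in auto)
  moreover have "(\<Sum>i<n. count e i * 1) = k" using e sum_count_lt[of e n]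
    by (simp add: multisets_of_size_def)
  ultimately show ?thesis unfolding mono_def[abs_def] by simp
qed

lemma polyf_gpol: "polyf (p - 1) (gpol n p c)"
  unfolding gpol_def[abs_def]
  by (rule polyf_sum[OF finite_M]) (auto intro: psmult polyf_mono_e)

lemma mono_homog:
  assumes "set_mset e \<subseteq> {..<n}"
  shows "mono n e (\<lambda>i. l * v i) = int l ^ size e * mono n e v"
proof -
  have "mono n e (\<lambda>i. l * v i) = (\<Prod>i<n. int l ^ count e i * int (v i) ^ count e i)"
    unfolding mono_def by (simp add: power_mult_distrib)
  also have "\<dots> = (\<Prod>i<n. int l ^ count e i) * mono n e v"
    unfolding mono_def by (rule prod.distrib)
  also have "(\<Prod>i<n. int l ^ count e i) = int l ^ size e"
    using sum_count_lt[OF assms] by (simp add: power_sum[symmetric])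
  finally show ?thesis .
qed

lemma gpol_homog: "gpol n p c (\<lambda>i. l * v i) = int l ^ (p - 1) * gpol n p c v"
  unfolding gpol_def sum_distrib_left
  by (intro sum.cong refl) (auto simp: mono_homog multisets_of_size_def)

lemma gpol_local: "(\<And>i. i < n \<Longrightarrow> v i = w i) \<Longrightarrow> gpol n p c v = gpol n p c w"
  unfolding gpol_def mono_def by (intro sum.cong refl arg_cong2[where f = "(*)"] prod.cong) auto

lemma prod_sum_vecs:
  fixes h :: "nat \<Rightarrow> nat \<Rightarrow> int"
  shows "(\<Sum>y\<in>vecs p n. \<Prod>i<n. h i (y i)) = (\<Prod>i<n. \<Sum>t<p. h i t)"
proof (induction n)
  case 0
  then show ?case by (simp add: vecs_0)
next
  case (Suc n)
  have "(\<Sum>y\<in>vecs p (Suc n). \<Prod>i<Suc n. h i (y i))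
      = (\<Sum>(x, t)\<in>vecs p n \<times> {..<p}. \<Prod>i<Suc n. h i ((x(n := t)) i))"
    unfolding vecs_Suc by (subst sum.reindex[OF vecs_Suc_inj]) (simp add: case_prod_beta)
  also have "\<dots> = (\<Sum>(x, t)\<in>vecs p n \<times> {..<p}. (\<Prod>i<n. h i (x i)) * h n t)"
    by (intro sum.cong refl) (auto intro!: prod.cong)
  also have "\<dots> = (\<Sum>x\<in>vecs p n. \<Sum>t<p. (\<Prod>i<n. h i (x i)) * h n t)"
    by (rule sum.cartesian_product[symmetric])
  also have "\<dots> = (\<Sum>x\<in>vecs p n. \<Prod>i<n. h i (x i)) * (\<Sum>t<p. h n t)"
    by (simp add: sum_product)
  finally show ?case using Suc.IH by simp
qed

lemma powsum_top:
  assumes p: "prime p"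
  shows "\<not> int p dvd (\<Sum>t<p. int t ^ (p - 1))"
proof -
  have p1: "p > 1" using prime_gt_1_nat[OF p] .
  have "(\<Sum>t<p. t ^ (p - 1)) mod p = (\<Sum>t<p. t ^ (p - 1) mod p) mod p" by (rule mod_sum_eq[symmetric])
  also have "(\<Sum>t<p. t ^ (p - 1) mod p) = (\<Sum>t<p. if t = 0 then 0 else 1)"
  proof (intro sum.cong refl)
    fix t assume t: "t \<in> {..<p}"
    show "t ^ (p - 1) mod p = (if t = 0 then 0 else 1)"
    proof (cases "t = 0")
      case True thus ?thesis using p1 by (cases "p - 1") auto
    next
      case False
      hence "\<not> p dvd t" using t by (auto dest: dvd_imp_le)
      hence "[t ^ (p - 1) = 1] (mod p)" using fermat_theorem[OF p] by blast
      thus ?thesis using False p1 by (simp add: cong_def)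
    qed
  qed
  also have "(\<Sum>t<p. if t = 0 then 0 else 1::nat) = card ({..<p} - {0})"
  proof -
    have "{..<p} \<inter> {0} = {0}" using p1 by auto
    thus ?thesis by (simp add: sum.If_cases Diff_eq)
  qed
  also have "\<dots> = p - 1" using p1 by simp
  finally have "(\<Sum>t<p. t ^ (p - 1)) mod p = p - 1" using p1 by simp
  hence "\<not> p dvd (\<Sum>t<p. t ^ (p - 1))" using p1 by (auto simp: dvd_eq_mod_eq_0)
  hence "\<not> int p dvd int (\<Sum>t<p. t ^ (p - 1))" using int_dvd_int_iff by blast
  moreover have "int (\<Sum>t<p. t ^ (p - 1)) = (\<Sum>t<p. int t ^ (p - 1))" by simp
  ultimately show ?thesis by simp
qed


lemma exists_smaller:
  fixes e e0 :: "nat multiset"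
  assumes e: "e \<in> multisets_of_size {..<n} k" and e0: "e0 \<in> multisets_of_size {..<n} k" and ne: "e \<noteq> e0"
  shows "\<exists>i<n. count e i < count e0 i"
proof (rule ccontr)
  assume "\<not> ?thesis"
  hence le: "count e0 i \<le> count e i" if "i < n" for i using that by auto
  have "count e0 i \<le> count e i" for i
  proof (cases "i < n")
    case True show ?thesis using le[of i] True by simp
  next
    case False
    hence "i \<notin> set_mset e0" using e0 by (auto simp: multisets_of_size_def)
    thus ?thesis by (simp add: not_in_iff)
  qed
  hence "e0 \<subseteq># e" by (simp add: subseteq_mset_def)
  hence "e0 \<subset># e" using ne by (simp add: subset_mset.le_neq_trans)
  hence "size e0 < size e" by (rule mset_subset_size)
  thus False using e e0 by (simp add: multisets_of_size_def)
qed

lemma count_le_k: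
  fixes e :: "nat multiset"
  assumes e: "e \<in> multisets_of_size {..<n} k" and i: "i < n"
  shows "count e i \<le> k"
proof -
  have "count e i \<le> (\<Sum>j<n. count e j)" using i by (intro member_le_sum) auto
  thus ?thesis using e sum_count_lt[of e n] by (simp add: multisets_of_size_def)
qed

lemma gpol_nonvanish:
  assumes p: "prime p" and e0: "e0 \<in> multisets_of_size {..<n} (p - 1)" and c0: "\<not> int p dvd c e0"
  shows "\<exists>y\<in>vecs p n. \<not> int p dvd gpol n p c y"
proof (rule ccontr)
  assume "\<not> ?thesis"
  hence allz: "\<forall>y\<in>vecs p n. int p dvd gpol n p c y" by blast
  define M where "M = multisets_of_size {..<n} (p - 1)"
  define w where "w y = (\<Prod>i<n. int (y i) ^ (p - 1 - count e0 i))" for y :: "nat \<Rightarrow> nat"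
  define PS where "PS a = (\<Sum>t<p. int t ^ a)" for a
  have finM: "finite M" unfolding M_def by (rule finite_M)
  have pr: "prime (int p)" using p by simp
  have T1: "int p dvd (\<Sum>y\<in>vecs p n. gpol n p c y * w y)" by (intro dvd_sum) (use allz in auto)
  have "(\<Sum>y\<in>vecs p n. gpol n p c y * w y) = (\<Sum>y\<in>vecs p n. \<Sum>e\<in>M. c e * (mono n e y * w y))"
    unfolding gpol_def M_def sum_distrib_right by (simp add: mult.assoc)
  also have "\<dots> = (\<Sum>e\<in>M. c e * (\<Sum>y\<in>vecs p n. mono n e y * w y))"
    by (subst sum.swap) (simp add: sum_distrib_left)
  also have "\<dots> = (\<Sum>e\<in>M. c e * (\<Prod>i<n. PS (count e i + (p - 1 - count e0 i))))"
  proof (intro sum.cong refl arg_cong2[where f = "(*)"])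
    fix e
    have "(\<Sum>y\<in>vecs p n. mono n e y * w y) = (\<Sum>y\<in>vecs p n. \<Prod>i<n. int (y i) ^ (count e i + (p - 1 - count e0 i)))"
      unfolding mono_def w_def by (simp add: prod.distrib[symmetric] power_add)
    also have "\<dots> = (\<Prod>i<n. PS (count e i + (p - 1 - count e0 i)))"
      unfolding PS_def by (rule prod_sum_vecs)
    finally show "(\<Sum>y\<in>vecs p n. mono n e y * w y) = (\<Prod>i<n. PS (count e i + (p - 1 - count e0 i)))" .
  qed
  also have "\<dots> = c e0 * (\<Prod>i<n. PS (count e0 i + (p - 1 - count e0 i)))
      + (\<Sum>e\<in>M - {e0}. c e * (\<Prod>i<n. PS (count e i + (p - 1 - count e0 i))))"
    using e0 finM unfolding M_def by (simp add: sum.remove)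
  finally have eq: "(\<Sum>y\<in>vecs p n. gpol n p c y * w y) = \<dots>" .
  have T3: "int p dvd (\<Sum>e\<in>M - {e0}. c e * (\<Prod>i<n. PS (count e i + (p - 1 - count e0 i))))"
  proof (intro dvd_sum dvd_mult)
    fix e assume e: "e \<in> M - {e0}"
    then obtain i where i: "i < n" "count e i < count e0 i"
      using exists_smaller[of e n "p - 1" e0] e0 unfolding M_def by auto
    have "count e0 i \<le> p - 1" using count_le_k[OF e0 i(1)] .
    hence "count e i + (p - 1 - count e0 i) < p - 1" using i(2) by linarith
    hence "int p dvd PS (count e i + (p - 1 - count e0 i))"
      unfolding PS_def by (rule powsum_zero_int[OF p])
    also have "\<dots> dvd (\<Prod>i<n. PS (count e i + (p - 1 - count e0 i)))"
      using i(1) by (intro dvd_prodI) auto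
    finally show "int p dvd (\<Prod>i<n. PS (count e i + (p - 1 - count e0 i)))" .
  qed
  have "(\<Prod>i<n. PS (count e0 i + (p - 1 - count e0 i))) = (\<Prod>i<n. PS (p - 1))"
  proof (intro prod.cong refl)
    fix i assume "i \<in> {..<n}"
    hence "count e0 i \<le> p - 1" using count_le_k[OF e0] by auto
    hence "count e0 i + (p - 1 - count e0 i) = p - 1" by (rule le_add_diff_inverse)
    thus "PS (count e0 i + (p - 1 - count e0 i)) = PS (p - 1)" by (rule arg_cong)
  qed
  moreover have "\<not> int p dvd (\<Prod>i<n. PS (p - 1))"
  proof (rule notI)
    assume "int p dvd (\<Prod>i<n. PS (p - 1))"
    hence "\<exists>i\<in>{..<n}. int p dvd PS (p - 1)" by (simp only: prime_dvd_prod_iff[OF finite_lessThan pr])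
    hence "int p dvd PS (p - 1)" by blast
    thus False using powsum_top[OF p] by (simp only: PS_def)
  qed
  ultimately have T4: "\<not> int p dvd (c e0 * (\<Prod>i<n. PS (count e0 i + (p - 1 - count e0 i))))"
    using c0 pr by (simp add: prime_dvd_mult_iff)
  from T1 T3 T4 show False unfolding eq by (simp add: dvd_add_left_iff)
qed


lemma fermat_int:
  assumes p: "prime p" and a: "\<not> int p dvd a"
  shows "int p dvd (a ^ (p - 1) - 1)"
proof -
  have pp: "int p > 0" using prime_gt_0_nat[OF p] by simp
  define b where "b = nat (a mod int p)"
  have bi: "int b = a mod int p" unfolding b_def using pp by simp
  have "b \<noteq> 0" using a bi by (auto simp: dvd_eq_mod_eq_0)
  moreover have "b < p" using bi pp by (metis of_nat_less_iff pos_mod_bound)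
  ultimately have "\<not> p dvd b" by (auto dest: dvd_imp_le)
  hence "[b ^ (p - 1) = 1] (mod p)" using fermat_theorem[OF p] by blast
  hence "[int b ^ (p - 1) = 1] (mod int p)" using cong_int_iff[of "b ^ (p - 1)" 1 p] by simp
  moreover have "[a = int b] (mod int p)" using bi by (simp add: cong_def)
  hence "[a ^ (p - 1) = int b ^ (p - 1)] (mod int p)" by (rule cong_pow)
  ultimately have "[a ^ (p - 1) = 1] (mod int p)" using cong_trans by blast
  thus ?thesis by (simp add: cong_iff_dvd_diff)
qed

lemma exists_form:
  assumes p: "prime p" and D: "D \<subseteq> vecs p n"
    and cardD: "card D < card (multisets_of_size {..<n} (p - 1))"
  shows "\<exists>c e0. e0 \<in> multisets_of_size {..<n} (p - 1) \<and> \<not> int p dvd c e0 \<and>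
     (\<forall>d\<in>D. int p dvd gpol n p c d)"
proof -
  define M where "M = multisets_of_size {..<n} (p - 1)"
  define C where "C = PiE M (\<lambda>_. {..<p})"
  define ev where "ev c = restrict (\<lambda>d. gpol n p (\<lambda>e. int (c e)) d mod int p) D" for c
  have pp: "int p > 0" "p > 1" using prime_gt_1_nat[OF p] by auto
  have finM: "finite M" unfolding M_def by (rule finite_M)
  have finD: "finite D" using D vecs_finite finite_subset by blast
  have img: "ev ` C \<subseteq> PiE D (\<lambda>_. {0..<int p})"
    unfolding ev_def using pp by (auto simp: pos_mod_bound)
  have cC: "card C = p ^ card M" unfolding C_def using finM by (simp add: card_PiE)
  have cT: "card (PiE D (\<lambda>_. {0..<int p})) = p ^ card D" using finD by (simp add: card_PiE)
  have "\<not> inj_on ev C"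
  proof
    assume "inj_on ev C"
    moreover have finT: "finite (PiE D (\<lambda>_. {0..<int p}))" by (rule finite_PiE[OF finD]) simp
    ultimately have "card C \<le> card (PiE D (\<lambda>_. {0..<int p}))"
      using img by (intro card_inj_on_le)
    hence "p ^ card M \<le> p ^ card D" using cC cT by simp
    hence "card M \<le> card D" by (rule power_le_imp_le_exp[OF pp(2)])
    thus False using cardD unfolding M_def by simp
  qed
  then obtain c1 c2 where c: "c1 \<in> C" "c2 \<in> C" "c1 \<noteq> c2" "ev c1 = ev c2"
    unfolding inj_on_def by blast
  obtain e0 where e0: "e0 \<in> M" "c1 e0 \<noteq> c2 e0"
    using c(1,2,3) unfolding C_def by (meson PiE_ext)
  define cf where "cf e = int (c1 e) - int (c2 e)" for e
  have "c1 e0 < p" "c2 e0 < p" using c(1,2) e0(1) unfolding C_def by auto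
  hence nd: "\<not> int p dvd cf e0" unfolding cf_def using not_dvd_diff e0(2) by blast
  have "int p dvd gpol n p cf d" if d: "d \<in> D" for d
  proof -
    have "gpol n p (\<lambda>e. int (c1 e)) d mod int p = gpol n p (\<lambda>e. int (c2 e)) d mod int p"
      using fun_cong[OF c(4), of d] d unfolding ev_def by simp
    hence "int p dvd (gpol n p (\<lambda>e. int (c1 e)) d - gpol n p (\<lambda>e. int (c2 e)) d)"
      by (simp add: mod_eq_dvd_iff)
    moreover have "gpol n p (\<lambda>e. int (c1 e)) d - gpol n p (\<lambda>e. int (c2 e)) d = gpol n p cf d"
      unfolding gpol_def cf_def by (simp add: sum_subtractf[symmetric] left_diff_distrib)
    ultimately show ?thesis by simp
  qed
  thus ?thesis using e0(1) nd unfolding M_def by blast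
qed


lemma line_vecs: "x \<in> vecs p n \<Longrightarrow> d \<in> vecs p n \<Longrightarrow> p > 0 \<Longrightarrow> line_pt p x d l \<in> vecs p n"
  unfolding vecs_def line_pt_def by auto

theorem theorem3p3:
  fixes p n :: nat and D :: "(nat \<Rightarrow> nat) set"
  assumes "prime p"
    and "p ^ 2 \<le> n"
    and "D \<subseteq> vecs p n"
    and "card D < (n + p - 2) choose (p - 1)"
  shows "\<exists>T1 T2. T1 \<subseteq> vecs p n \<and> T2 \<subseteq> vecs p n \<and> T1 \<inter> T2 = {} \<and>
           num_lines p n (\<lambda>i. if i = 1 then T1 else T2) \<ge> p ^ (2 * n + p - p ^ 2) \<and>
           (\<forall>x \<in> vecs p n. \<forall>d \<in> D. \<not> rect_contains p (\<lambda>i. if i = 1 then T1 else T2) x d)"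
proof -
  note p = assms(1)
  have p1: "p > 1" using prime_gt_1_nat[OF p] .
  have pp: "int p > 0" using p1 by simp
  have pr: "prime (int p)" using p by simp
  have cardM: "card (multisets_of_size {..<n} (p - 1)) = (n + p - 2) choose (p - 1)"
  proof -
    have "card (multisets_of_size {..<n} (p - 1)) = (card {..<n} + (p - 1) - 1) choose (p - 1)"
      by (rule card_multisets_of_size) simp
    moreover have "card {..<n} + (p - 1) - 1 = n + p - 2" using p1 by simp
    ultimately show ?thesis by simp
  qed
  obtain c e0 where ce: "e0 \<in> multisets_of_size {..<n} (p - 1)" "\<not> int p dvd c e0"
    "\<forall>d\<in>D. int p dvd gpol n p c d"
    using exists_form[OF p assms(3)] assms(4) cardM by auto
  obtain d0 where d0: "d0 \<in> vecs p n" "\<not> int p dvd gpol n p c d0"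
    using gpol_nonvanish[of p e0 n c, OF p ce(1,2)] by blast
  define g where "g = gpol n p c"
  define cc where "cc = g d0"
  define P where "P v = g v - cc" for v
  have polyP: "polyf (p - 1) P"
    unfolding P_def[abs_def] g_def by (rule polyf_diff[OF polyf_gpol pconst])
  have Phom: "P (\<lambda>i. l * v i) = int l ^ (p - 1) * g v - cc" for l v
    unfolding P_def g_def by (simp add: gpol_homog)
  define T1 where "T1 = {y\<in>vecs p n. \<not> int p dvd P y}"
  define T2 where "T2 = {y\<in>vecs p n. int p dvd P y}"
  define T where "T = (\<lambda>i::nat. if i = 1 then T1 else T2)"
  have pmodline: "P (line_pt p x d l) mod int p = P (\<lambda>i. x i + l * d i) mod int p" for x d l
    by (rule polyf_cong[OF polyP]) (simp add: line_pt_def)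
  have noD: "\<forall>x\<in>vecs p n. \<forall>d\<in>D. \<not> rect_contains p T x d"
  proof (intro ballI notI)
    fix x d assume x: "x \<in> vecs p n" and d: "d \<in> D" and rc: "rect_contains p T x d"
    have h0: "\<not> int p dvd P (line_pt p x d 0)"
      using rc p1 unfolding rect_contains_def T_def T1_def by auto
    have hl: "int p dvd P (line_pt p x d l)" if "l \<in> {1..<p}" for l
      using rc that unfolding rect_contains_def T_def T2_def by auto
    have "(\<Sum>l<p. P (line_pt p x d l)) mod int p = (\<Sum>l<p. P (line_pt p x d l) mod int p) mod int p"
      by (rule mod_sum_eq[symmetric])
    also have "\<dots> = (\<Sum>l<p. P (\<lambda>i. x i + l * d i) mod int p) mod int p"
      using pmodline by simp
    also have "\<dots> = (\<Sum>l<p. P (\<lambda>i. x i + l * d i)) mod int p"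
      by (rule mod_sum_eq)
    also have "\<dots> = (\<Sum>l<p. P (\<lambda>i. l * d i)) mod int p"
      by (rule sum_line[OF p polyP])
    also have "(\<Sum>l<p. P (\<lambda>i. l * d i)) = g d * (\<Sum>l<p. int l ^ (p - 1)) - int p * cc"
      unfolding Phom by (simp add: sum_subtractf sum_distrib_left mult.commute)
    also have "(g d * (\<Sum>l<p. int l ^ (p - 1)) - int p * cc) mod int p = 0"
      using ce(3) d unfolding g_def by (simp add: dvd_eq_mod_eq_0[symmetric])
    finally have "int p dvd (\<Sum>l<p. P (line_pt p x d l))" by (simp add: dvd_eq_mod_eq_0)
    moreover have "(\<Sum>l<p. P (line_pt p x d l)) = P (line_pt p x d 0) + (\<Sum>l\<in>{Suc 0..<p}. P (line_pt p x d l))"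
      using p1 by (simp add: atLeast0LessThan[symmetric] sum.atLeast_Suc_lessThan)
    moreover have "int p dvd (\<Sum>l\<in>{Suc 0..<p}. P (line_pt p x d l))"
      using hl by (intro dvd_sum) auto
    ultimately have "int p dvd P (line_pt p x d 0)" by (simp add: dvd_add_left_iff)
    thus False using h0 by simp
  qed
  define L where "L = {(x, d). x \<in> vecs p n \<and> d \<in> vecs p n \<and> rect_contains p T x d}"
  define X where "X u = (\<lambda>i. if i < n then u i else 0)" for u :: "nat \<Rightarrow> nat"
  define Dv where "Dv u = (\<lambda>i. if i < n then u (n + i) else 0)" for u :: "nat \<Rightarrow> nat"
  define cb where "cb l u = (\<lambda>i. if i < n then u i + l * u (n + i) else 0)" for l and u :: "nat \<Rightarrow> nat"
  define F where "F u = P (cb 0 u) ^ (p - 1) * (\<Prod>l\<in>{1..<p}. 1 - P (cb l u) ^ (p - 1))" for u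
  define K where "K = (p - 1) * (p - 1) + (\<Sum>l\<in>{1..<p}. (p - 1) * (p - 1))"
  have pcb: "polyf (p - 1) (\<lambda>u. P (cb l u))" for l
  proof (rule polyf_subst[OF polyP])
    fix i
    show "polyf 1 (\<lambda>u. int (cb l u i))"
    proof (cases "i < n")
      case True
      have "polyf 1 (\<lambda>u. int (u i) + int l * int (u (n + i)))"
        by (intro padd psmult polyf_var)
      thus ?thesis using True unfolding cb_def by simp
    next
      case False
      thus ?thesis unfolding cb_def using pconst[of 1 0] by simp
    qed
  qed
  have polyF: "polyf K F"
  proof -
    have a: "polyf ((p - 1) * (p - 1)) (\<lambda>u. P (cb 0 u) ^ (p - 1))" by (rule polyf_pow[OF pcb])
    have b: "polyf (\<Sum>l\<in>{1..<p}. (p - 1) * (p - 1)) (\<lambda>u. \<Prod>l\<in>{1..<p}. 1 - P (cb l u) ^ (p - 1))"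
    proof (rule polyf_prod)
      fix l
      show "polyf ((p - 1) * (p - 1)) (\<lambda>u. 1 - P (cb l u) ^ (p - 1))"
        using polyf_diff[OF pconst[of "(p - 1) * (p - 1)" 1] polyf_pow[OF pcb[of l], of "p - 1"]] .
    qed simp
    show ?thesis using polyf_mult[OF a b] unfolding K_def F_def[abs_def] .
  qed
  obtain q where q: "p = Suc q" using p1 by (cases p) auto
  have KK: "K = q * (p * q)" unfolding K_def q by (simp add: algebra_simps)
  define u0 where "u0 = (\<lambda>i. if n \<le> i \<and> i < 2 * n then d0 (i - n) else 0)"
  have u0v: "u0 \<in> vecs p (2 * n)" using d0(1) unfolding u0_def vecs_def by auto
  have cbu0: "P (cb l u0) = int l ^ (p - 1) * cc - cc" for l
  proof -
    have "g (cb l u0) = g (\<lambda>i. l * d0 i)"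
      unfolding g_def by (rule gpol_local) (simp add: cb_def u0_def)
    thus ?thesis unfolding P_def cc_def by (simp add: g_def gpol_homog)
  qed
  have ncc: "\<not> int p dvd cc" using d0(2) unfolding cc_def g_def .
  have Fu0: "\<not> int p dvd F u0"
  proof -
    have "P (cb 0 u0) = - cc" using cbu0[of 0] q p1 by simp
    hence "\<not> int p dvd P (cb 0 u0)" using ncc by simp
    moreover have "p - 1 > 0" using p1 by simp
    ultimately have "\<not> int p dvd P (cb 0 u0) ^ (p - 1)"
      by (simp add: prime_dvd_power_iff[OF pr])
    moreover have "\<not> int p dvd (1 - P (cb l u0) ^ (p - 1))" if l: "l \<in> {1..<p}" for l
    proof
      assume a: "int p dvd (1 - P (cb l u0) ^ (p - 1))"
      have "\<not> int p dvd int l" using l by (auto dest: zdvd_imp_le)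
      hence "int p dvd (int l ^ (p - 1) - 1)" by (rule fermat_int[OF p])
      hence "int p dvd (int l ^ (p - 1) - 1) * cc" by (rule dvd_mult2)
      hence "int p dvd P (cb l u0)" unfolding cbu0 by (simp add: left_diff_distrib)
      hence "int p dvd P (cb l u0) ^ (p - 1)" using p1 by (intro dvd_trans[OF _ dvd_power]) auto
      hence "int p dvd 1" using a by (metis dvd_add_right_iff diff_add_cancel)
      thus False using p1 by simp
    qed
    hence "\<not> int p dvd (\<Prod>l\<in>{1..<p}. 1 - P (cb l u0) ^ (p - 1))"
      by (simp add: prime_dvd_prod_iff[OF finite_atLeastLessThan pr])
    ultimately show ?thesis unfolding F_def by (simp add: prime_dvd_mult_iff[OF pr])
  qed
  define S where "S = {u\<in>vecs p (2 * n). F u mod int p \<noteq> 0}"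
  have AF: "p ^ ((2 * n) * (p - 1)) \<le> card S ^ (p - 1) * p ^ K"
    unfolding S_def using alon_furedi[OF p polyF] u0v Fu0 by (auto simp: dvd_eq_mod_eq_0)
  have uvecs: "X u \<in> vecs p n" "Dv u \<in> vecs p n" if "u \<in> vecs p (2 * n)" for u
    using that unfolding X_def Dv_def vecs_def by auto
  have lcb: "P (line_pt p (X u) (Dv u) l) mod int p = P (cb l u) mod int p" for u l
    by (rule polyf_cong[OF polyP]) (simp add: line_pt_def X_def Dv_def cb_def)
  have SL: "(\<lambda>u. (X u, Dv u)) ` S \<subseteq> L"
  proof (rule image_subsetI)
    fix u assume "u \<in> S"
    hence u: "u \<in> vecs p (2 * n)" "\<not> int p dvd F u" unfolding S_def by (auto simp: dvd_eq_mod_eq_0)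
    have n0: "\<not> int p dvd P (cb 0 u)"
    proof
      assume "int p dvd P (cb 0 u)"
      hence "int p dvd P (cb 0 u) ^ (p - 1)" using p1 by (intro dvd_trans[OF _ dvd_power]) auto
      hence "int p dvd F u" unfolding F_def by simp
      thus False using u(2) by simp
    qed
    have nl: "int p dvd P (cb l u)" if l: "l \<in> {1..<p}" for l
    proof (rule ccontr)
      assume "\<not> int p dvd P (cb l u)"
      hence "int p dvd (P (cb l u) ^ (p - 1) - 1)" by (rule fermat_int[OF p])
      hence "int p dvd (1 - P (cb l u) ^ (p - 1))" by (metis dvd_minus_iff minus_diff_eq)
      also have "\<dots> dvd (\<Prod>l\<in>{1..<p}. 1 - P (cb l u) ^ (p - 1))"
        using l by (intro dvd_prodI) auto
      finally have "int p dvd F u" unfolding F_def by simp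
      thus False using u(2) by simp
    qed
    have "rect_contains p T (X u) (Dv u)"
      unfolding rect_contains_def
    proof (intro allI impI)
      fix l assume l: "l < p"
      have lv: "line_pt p (X u) (Dv u) l \<in> vecs p n" using line_vecs uvecs[OF u(1)] p1 by auto
      show "line_pt p (X u) (Dv u) l \<in> T (l + 1)"
      proof (cases "l = 0")
        case True
        have "\<not> int p dvd P (line_pt p (X u) (Dv u) l)"
          using n0 lcb[of u l] True by (simp add: dvd_eq_mod_eq_0)
        thus ?thesis using True lv unfolding T_def T1_def by simp
      next
        case False
        hence "int p dvd P (line_pt p (X u) (Dv u) l)"
          using nl[of l] l lcb[of u l] by (simp add: dvd_eq_mod_eq_0)
        thus ?thesis using False lv unfolding T_def T2_def by simp
      qed
    qed
    thus "(X u, Dv u) \<in> L" unfolding L_def using uvecs[OF u(1)] by simp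
  qed
  have inj: "inj_on (\<lambda>u. (X u, Dv u)) S"
  proof (rule inj_onI)
    fix u v assume uv: "u \<in> S" "v \<in> S" "(X u, Dv u) = (X v, Dv v)"
    hence uv': "u \<in> vecs p (2 * n)" "v \<in> vecs p (2 * n)" "X u = X v" "Dv u = Dv v"
      unfolding S_def by auto
    show "u = v"
    proof
      fix i
      consider "i < n" | "n \<le> i" "i < 2 * n" | "2 * n \<le> i" by linarith
      thus "u i = v i"
      proof cases
        case 1 thus ?thesis using fun_cong[OF uv'(3), of i] unfolding X_def by simp
      next
        case 2
        hence "i - n < n" "n + (i - n) = i" by auto
        thus ?thesis using fun_cong[OF uv'(4), of "i - n"] unfolding Dv_def by simp
      next
        case 3 thus ?thesis using uv'(1,2) unfolding vecs_def by auto
      qed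
    qed
  qed
  have finL: "finite L"
  proof (rule finite_subset)
    show "L \<subseteq> vecs p n \<times> vecs p n" unfolding L_def by auto
    show "finite (vecs p n \<times> vecs p n)" using vecs_finite by simp
  qed
  have cSL: "card S \<le> card L" using card_inj_on_le[OF inj SL finL] .
  define E where "E = 2 * n + p - p ^ 2"
  have "p * q + p = p * p" unfolding q by simp
  moreover have "p * p \<le> n" using assms(2) by (simp add: power2_eq_square)
  ultimately have Eeq: "E + p * q = 2 * n" unfolding E_def power2_eq_square by arith
  have "(p ^ E) ^ q * p ^ K = (p ^ E * p ^ (p * q)) ^ q"
    unfolding KK by (simp add: power_mult_distrib power_mult[symmetric] mult.commute)
  also have "\<dots> = p ^ ((2 * n) * (p - 1))"
  proof -
    have "p ^ E * p ^ (p * q) = p ^ (2 * n)" using Eeq by (simp only: power_add[symmetric])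
    moreover have "p - 1 = q" using q by simp
    ultimately show ?thesis by (simp only: power_mult)
  qed
  also have "\<dots> \<le> card S ^ (p - 1) * p ^ K" by (rule AF)
  also have "\<dots> = card S ^ q * p ^ K" using q by simp
  also have "\<dots> \<le> card L ^ q * p ^ K" using cSL by (intro mult_right_mono power_mono) auto
  finally have "(p ^ E) ^ q * p ^ K \<le> card L ^ q * p ^ K" .
  moreover have "0 < p ^ K" using p1 by simp
  ultimately have le: "(p ^ E) ^ q \<le> card L ^ q" by (rule mult_right_le_imp_le)
  obtain r where r: "q = Suc r" using q p1 by (cases q) auto
  have le2: "(p ^ E) ^ Suc r \<le> card L ^ Suc r" using le unfolding r .
  have "p ^ E \<le> card L" by (rule power_le_imp_le_base[OF le2]) simp
  moreover have "num_lines p n T = card L" unfolding num_lines_def L_def ..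
  ultimately have cnt: "num_lines p n T \<ge> p ^ (2 * n + p - p ^ 2)" unfolding E_def by simp
  have "T1 \<subseteq> vecs p n" "T2 \<subseteq> vecs p n" "T1 \<inter> T2 = {}" unfolding T1_def T2_def by auto
  thus ?thesis using cnt noD unfolding T_def by blast
qed

end
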